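(* Let $\mathbf A$ be a nonzero $m\times n$ real matrix, $\mathbf B=[\mathbf b_1\ \cdots\ \mathbf b_\ell]$ an $m\times\ell$ real matrix, and $\mathbf D$ an $n\times n$ diagonal matrix with strictly positive diagonal. Let $r:=\mathrm{rank}([\mathbf A\ \mathbf B])-\mathrm{rank}(\mathbf A)$ (so $0\le r\le\ell$). Then $$v:=\min_{\mathbf c\in\mathbb R^n,\mathbf d\in\mathbb R^\ell}\Big\{(\mathbf A\mathbf c+\mathbf B\mathbf d)^\top(\mathbf A\mathbf D\mathbf A^\top)(\mathbf A\mathbf c+\mathbf B\mathbf d):\ \|\mathbf A\mathbf c+\mathbf B\mathbf d\|_2=1,\ \mathbf B^\top(\mathbf A\mathbf c+\mathbf B\mathbf d)\le\mathbf 0,\ \mathbf d\ge\mathbf 0\Big\}$$ satisfies $v\ge v_{\min}>0$, where $$v_{\min}:=\min_{\mathbf C}\big\{\lambda_{\min}^{++}(\mathbf A\mathbf D\mathbf A^\top+\mathbf C\mathbf C^\top):\ \mathbf C\text{ is an }m\times p\text{ submatrix of }\mathbf B\text{ formed by }p\text{ of its columns},\ r\le p\le\ell\big\}$$ (for $p=0$, $\mathbf C\mathbf C^\top$ is the zero matrix).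
   Context: For a nonzero symmetric positive semidefinite matrix $\mathbf S$, $\lambda_{\min}^{++}(\mathbf S)$ is its smallest strictly positive eigenvalue. Vector inequalities are componentwise. *)

theory Defs
  imports "HOL-Analysis.Analysis"
begin

text \<open>Horizontal concatenation [A B] of an m x n and an m x l matrix;
  the column index type is the disjoint sum 'n + 'l.\<close>
definition hconcat :: "real^'n^'m \<Rightarrow> real^'l^'m \<Rightarrow> real^('n + 'l)^'m" where
  "hconcat A B = (\<chi> i j. case j of Inl a \<Rightarrow> A $ i $ a | Inr b \<Rightarrow> B $ i $ b)"

definition lambda_min_pp :: "real^'m^'m \<Rightarrow> real" where
  "lambda_min_pp S = Min {t. t > 0 \<and> (\<exists>x. x \<noteq> 0 \<and> S *v x = t *\<^sub>R x)}"

text \<open>C C^T for the submatrix C of B formed by the columns indexed by J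
  (the zero matrix when J is empty).\<close>
definition subcols_gram :: "real^'l^'m \<Rightarrow> 'l set \<Rightarrow> real^'m^'m" where
  "subcols_gram B J = (\<chi> i k. \<Sum>j\<in>J. B $ i $ j * B $ k $ j)"

end

theory Submission
  imports Defs
begin


definition indep_mod :: "'a::euclidean_space set \<Rightarrow> ('l \<Rightarrow> 'a) \<Rightarrow> 'l set \<Rightarrow> bool" where
  "indep_mod S b J \<longleftrightarrow> (\<forall>j\<in>J. b j \<notin> span (S \<union> b ` (J - {j})))"

lemma indep_mod_mono: assumes "indep_mod S b (insert j J)" shows "indep_mod S b J"
  unfolding indep_mod_def
proof
  fix i assume i: "i \<in> J"
  have "span (S \<union> b ` (J - {i})) \<subseteq> span (S \<union> b ` (insert j J - {i}))"
    by (intro span_mono) auto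
  then show "b i \<notin> span (S \<union> b ` (J - {i}))" using assms i unfolding indep_mod_def by auto
qed

lemma extend_lemma:
  fixes b :: "'l \<Rightarrow> 'a::euclidean_space"
  assumes "finite J" "indep_mod S b J" "x0 \<in> span S"
  shows "\<exists>x \<in> span (S \<union> b ` J). (\<forall>v\<in>S. v \<bullet> x = v \<bullet> x0) \<and> (\<forall>j\<in>J. b j \<bullet> x = 0) \<and> norm x0 \<le> norm x"
  using assms
proof (induction J rule: finite_induct)
  case empty
  then show ?case by auto
next
  case (insert j J)
  from insert.IH[OF indep_mod_mono[OF insert.prems(1)] insert.prems(2)]
  obtain x where x: "x \<in> span (S \<union> b ` J)" "\<forall>v\<in>S. v \<bullet> x = v \<bullet> x0" "\<forall>i\<in>J. b i \<bullet> x = 0" "norm x0 \<le> norm x"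
    by blast
  have nc: "b j \<notin> span (S \<union> b ` J)"
    using insert.prems(1) insert.hyps(2) unfolding indep_mod_def by auto
  obtain p n where p: "p \<in> span (S \<union> b ` J)" and n: "\<And>w. w \<in> span (S \<union> b ` J) \<Longrightarrow> orthogonal n w"
    and bj: "b j = p + n"
    using orthogonal_subspace_decomp_exists by metis
  have orth: "w \<bullet> n = 0" if "w \<in> span (S \<union> b ` J)" for w
    using n[OF that] by (simp add: orthogonal_def inner_commute)
  have nnz: "n \<noteq> 0" using nc bj p by auto
  have nn: "n \<bullet> n > 0" using nnz by simp
  have cn: "b j \<bullet> n = n \<bullet> n" using bj orth[OF p] by (simp add: inner_add_left)
  define s where "s = - (b j \<bullet> x) / (n \<bullet> n)"
  define x' where "x' = x + s *\<^sub>R n"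
  have xn: "x \<bullet> n = 0" using orth[OF x(1)] .
  have "x' \<in> span (S \<union> b ` insert j J)"
  proof -
    have sub: "span (S \<union> b ` J) \<subseteq> span (S \<union> b ` insert j J)" by (intro span_mono) auto
    have "b j \<in> span (S \<union> b ` insert j J)" by (intro span_base) auto
    then have "n \<in> span (S \<union> b ` insert j J)"
      using bj p sub by (metis add_diff_cancel_left' span_diff subsetD)
    then show ?thesis unfolding x'_def using x(1) sub by (intro span_add span_scale) auto
  qed
  moreover have "\<forall>v\<in>S. v \<bullet> x' = v \<bullet> x0"
    using x(2) orth unfolding x'_def by (auto simp: inner_add_right span_base)
  moreover have "\<forall>i\<in>insert j J. b i \<bullet> x' = 0"
  proof
    fix i assume "i \<in> insert j J"
    then show "b i \<bullet> x' = 0"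
    proof
      assume "i = j"
      have "n \<bullet> n \<noteq> 0" using nn by simp
      then show ?thesis using cn \<open>i = j\<close> unfolding x'_def s_def by (simp add: inner_add_right inner_diff_right)
    next
      assume "i \<in> J"
      then show ?thesis using x(3) orth[of "b i"] unfolding x'_def
        by (simp add: inner_add_right span_base)
    qed
  qed
  moreover have "norm x0 \<le> norm x'"
  proof -
    have "norm x' ^ 2 = norm x ^ 2 + s^2 * (n \<bullet> n)"
      unfolding x'_def power2_norm_eq_inner using xn
      by (simp add: inner_add_left inner_add_right inner_commute power2_eq_square)
    then have "norm x ^ 2 \<le> norm x' ^ 2" using nn by (simp add: add_increasing2)
    then have "norm x \<le> norm x'" by (simp add: power2_le_iff_abs_le)
    then show ?thesis using x(4) by simp
  qed
  ultimately show ?case by blast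
qed


lemma span_rep:
  fixes b :: "'l \<Rightarrow> 'a::euclidean_space"
  assumes "finite K" "y \<in> span (S \<union> b ` K)"
  shows "\<exists>\<mu>. y - (\<Sum>i\<in>K. \<mu> i *\<^sub>R b i) \<in> span S"
  using assms
proof (induction K arbitrary: y rule: finite_induct)
  case empty then show ?case by simp
next
  case (insert i K)
  have "span (S \<union> b ` insert i K) = span (insert (b i) (S \<union> b ` K))" by simp
  with insert.prems obtain k where k: "y - k *\<^sub>R b i \<in> span (S \<union> b ` K)"
    using span_insert[of "b i" "S \<union> b ` K"] by auto
  from insert.IH[OF k] obtain \<mu> where \<mu>: "y - k *\<^sub>R b i - (\<Sum>i\<in>K. \<mu> i *\<^sub>R b i) \<in> span S" by blast
  define \<nu> where "\<nu> = \<mu>(i := k)"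
  have "(\<Sum>l\<in>K. \<nu> l *\<^sub>R b l) = (\<Sum>l\<in>K. \<mu> l *\<^sub>R b l)"
    using insert.hyps(2) by (intro sum.cong) (auto simp: \<nu>_def)
  then have "y - (\<Sum>l\<in>insert i K. \<nu> l *\<^sub>R b l) = y - k *\<^sub>R b i - (\<Sum>i\<in>K. \<mu> i *\<^sub>R b i)"
    using insert.hyps by (simp add: \<nu>_def algebra_simps)
  then show ?case using \<mu> by metis
qed

lemma caratheodory_mod:
  fixes b :: "'l::finite \<Rightarrow> 'a::euclidean_space"
  assumes "\<forall>j. d j \<ge> (0::real)" "y - (\<Sum>j\<in>UNIV. d j *\<^sub>R b j) \<in> span S"
  shows "\<exists>K e. (\<forall>j\<in>K. e j \<ge> 0) \<and> y - (\<Sum>j\<in>K. e j *\<^sub>R b j) \<in> span S \<and> indep_mod S b K"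
proof -
  define P where "P K \<longleftrightarrow> (\<exists>e. (\<forall>j\<in>K. e j \<ge> 0) \<and> y - (\<Sum>j\<in>K. e j *\<^sub>R b j) \<in> span S)" for K
  have "P UNIV" using assms unfolding P_def by blast
  then obtain K where PK: "P K" and min: "\<And>K'. P K' \<Longrightarrow> card K \<le> card K'"
    using ex_has_least_nat[of P UNIV card] by blast
  from PK obtain e where e: "\<forall>j\<in>K. e j \<ge> 0" "y - (\<Sum>j\<in>K. e j *\<^sub>R b j) \<in> span S"
    unfolding P_def by blast
  have "indep_mod S b K"
    unfolding indep_mod_def
  proof (rule ballI, rule notI)
    fix j assume jK: "j \<in> K" and jin: "b j \<in> span (S \<union> b ` (K - {j}))"
    obtain \<mu> where \<mu>: "b j - (\<Sum>i\<in>K - {j}. \<mu> i *\<^sub>R b i) \<in> span S"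
      using span_rep[OF _ jin] by auto
    define la where "la = (\<lambda>i. if i = j then 1 else - \<mu> i)"
    have lam: "(\<Sum>i\<in>K. la i *\<^sub>R b i) \<in> span S"
    proof -
      have "(\<Sum>i\<in>K. la i *\<^sub>R b i) = la j *\<^sub>R b j + (\<Sum>i\<in>K - {j}. la i *\<^sub>R b i)"
        using jK by (simp add: sum.remove)
      also have "(\<Sum>i\<in>K - {j}. la i *\<^sub>R b i) = - (\<Sum>i\<in>K - {j}. \<mu> i *\<^sub>R b i)"
        by (simp add: la_def sum_negf[symmetric])
      finally show ?thesis using \<mu> by (simp add: la_def)
    qed
    define Pos where "Pos = {i\<in>K. la i > 0}"
    have Pf: "finite Pos" "Pos \<noteq> {}" using jK by (auto simp: Pos_def la_def)
    define t where "t = Min ((\<lambda>i. e i / la i) ` Pos)"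
    have "t \<in> (\<lambda>i. e i / la i) ` Pos" unfolding t_def using Pf by (intro Min_in) auto
    then obtain i0 where i0: "i0 \<in> Pos" "t = e i0 / la i0" by auto
    have tle: "t \<le> e i / la i" if "i \<in> Pos" for i
      unfolding t_def using Pf that by auto
    have t0: "t \<ge> 0" using i0 e(1) by (auto simp: Pos_def)
    define e' where "e' = (\<lambda>i. e i - t * la i)"
    have e'0: "\<forall>i\<in>K - {i0}. e' i \<ge> 0"
    proof
      fix i assume i: "i \<in> K - {i0}"
      show "e' i \<ge> 0"
      proof (cases "la i > 0")
        case True
        then have "i \<in> Pos" using i by (auto simp: Pos_def)
        from tle[OF this] True have "t * la i \<le> e i" by (simp add: pos_le_divide_eq)
        then show ?thesis by (simp add: e'_def)
      next
        case False
        then have "t * la i \<le> 0" using t0 by (simp add: mult_nonneg_nonpos)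
        moreover have "e i \<ge> 0" using e(1) i by auto
        ultimately show ?thesis by (simp add: e'_def)
      qed
    qed
    have e'i0: "e' i0 = 0" using i0 by (auto simp: e'_def Pos_def)
    have "y - (\<Sum>i\<in>K - {i0}. e' i *\<^sub>R b i) = y - (\<Sum>i\<in>K. e' i *\<^sub>R b i)"
    proof -
      have "i0 \<in> K" using i0 by (simp add: Pos_def)
      then have "(\<Sum>i\<in>K. e' i *\<^sub>R b i) = e' i0 *\<^sub>R b i0 + (\<Sum>i\<in>K - {i0}. e' i *\<^sub>R b i)"
        by (simp add: sum.remove)
      then show ?thesis using e'i0 by simp
    qed
    also have "\<dots> = (y - (\<Sum>j\<in>K. e j *\<^sub>R b j)) + t *\<^sub>R (\<Sum>i\<in>K. la i *\<^sub>R b i)"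
      by (simp add: e'_def scaleR_diff_left sum_subtractf scaleR_sum_right algebra_simps)
    finally have "P (K - {i0})" unfolding P_def using e'0 e(2) lam
      by (metis span_add span_scale)
    from min[OF this] have "card K \<le> card (K - {i0})" .
    moreover have "card (K - {i0}) < card K" using i0 by (intro card_Diff1_less) (auto simp: Pos_def)
    ultimately show False by simp
  qed
  then show ?thesis using e by blast
qed

lemma max_extension:
  fixes b :: "'l::finite \<Rightarrow> 'a::euclidean_space"
  shows "\<exists>E. indep_mod S b E \<and> (\<forall>k. b k \<in> span (S \<union> b ` E))"
proof -
  define P where "P E \<longleftrightarrow> indep_mod S b E" for E
  have "P {}" by (simp add: P_def indep_mod_def)
  then obtain E where PE: "P E" and mx: "\<And>E'. P E' \<Longrightarrow> CARD('l) - card E \<le> CARD('l) - card E'"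
    using ex_has_least_nat[of P "{}" "\<lambda>E. CARD('l) - card E"] by blast
  have "b k \<in> span (S \<union> b ` E)" for k
  proof (rule ccontr)
    assume nk: "b k \<notin> span (S \<union> b ` E)"
    then have kE: "k \<notin> E" by (auto intro: span_base)
    have "P (insert k E)" unfolding P_def indep_mod_def
    proof
      fix j assume j: "j \<in> insert k E"
      show "b j \<notin> span (S \<union> b ` (insert k E - {j}))"
      proof (cases "j = k")
        case True then show ?thesis using nk kE by simp
      next
        case False
        then have jE: "j \<in> E" using j by auto
        have nj: "b j \<notin> span (S \<union> b ` (E - {j}))" using PE jE unfolding P_def indep_mod_def by auto
        have eq: "S \<union> b ` (insert k E - {j}) = insert (b k) (S \<union> b ` (E - {j}))" using False by auto
        show ?thesis
        proof
          assume "b j \<in> span (S \<union> b ` (insert k E - {j}))"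
          then have "b k \<in> span (insert (b j) (S \<union> b ` (E - {j})))"
            using in_span_insert nj eq by metis
          moreover have "insert (b j) (S \<union> b ` (E - {j})) = S \<union> b ` E" using jE by auto
          ultimately show False using nk by simp
        qed
      qed
    qed
    from mx[OF this] have "CARD('l) - card E \<le> CARD('l) - card (insert k E)" .
    moreover have "card (insert k E) = card E + 1" using kE by simp
    moreover have "card (insert k E) \<le> CARD('l)" by (rule card_mono) auto
    ultimately show False by simp
  qed
  then show ?thesis using PE unfolding P_def by blast
qed



lemma quad_nonneg_zero:
  fixes a b :: real
  assumes "\<And>s. 0 \<le> 2 * s * a + s^2 * b"
  shows "a = 0"
proof (rule ccontr)
  assume a: "a \<noteq> 0"
  define e where "e = 1 / (\<bar>b\<bar> + 1)"
  have e0: "e > 0" unfolding e_def by (simp add: add_pos_nonneg)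
  have eb: "e * b < 1"
  proof -
    have "e * b \<le> e * \<bar>b\<bar>" using e0 by (simp add: mult_left_mono)
    also have "\<dots> < 1" unfolding e_def by (simp add: divide_less_eq)
    finally show ?thesis .
  qed
  have "0 \<le> 2 * (- e * a) * a + (- e * a)^2 * b" by (rule assms)
  also have "\<dots> = e * a^2 * (e * b - 2)" by (simp add: power2_eq_square algebra_simps)
  also have "\<dots> < 0"
  proof -
    have "e * a^2 > 0" using e0 a by simp
    moreover have "e * b - 2 < 0" using eb by simp
    ultimately show ?thesis by (simp add: mult_pos_neg)
  qed
  finally show False by simp
qed

lemma rayleigh:
  fixes M :: "real^'m^'m"
  assumes sym: "\<And>x y. (M *v x) \<bullet> y = x \<bullet> (M *v y)"
    and V: "subspace V" and inv: "\<And>x. x \<in> V \<Longrightarrow> M *v x \<in> V"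
    and pd: "\<And>x. x \<in> V \<Longrightarrow> x \<noteq> 0 \<Longrightarrow> x \<bullet> (M *v x) > 0"
    and x: "x \<in> V" "x \<noteq> 0"
  shows "\<exists>t z. z \<noteq> 0 \<and> M *v z = t *\<^sub>R z \<and> t > 0 \<and> t * (norm x)^2 \<le> x \<bullet> (M *v x)"
proof -
  define f where "f z = z \<bullet> (M *v z)" for z
  define S where "S = V \<inter> sphere 0 1"
  have cS: "compact S" unfolding S_def using closed_subspace[OF V] by (metis Int_commute compact_Int_closed compact_sphere)
  have xS: "x /\<^sub>R norm x \<in> S" using x V unfolding S_def by (simp add: subspace_scale)
  have cf: "continuous_on S f" unfolding f_def
    by (intro continuous_intros linear_continuous_on matrix_vector_mul_bounded_linear)
  obtain z where zS: "z \<in> S" and zmin: "\<And>w. w \<in> S \<Longrightarrow> f z \<le> f w"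
    using continuous_attains_inf[OF cS _ cf] xS by blast
  define t where "t = f z"
  have zV: "z \<in> V" and zn: "norm z = 1" using zS by (auto simp: S_def)
  then have z0: "z \<noteq> 0" by auto
  have tpos: "t > 0" using pd[OF zV z0] by (simp add: t_def f_def)
  have fscale: "f (c *\<^sub>R w) = c^2 * f w" for c w
    by (simp add: f_def matrix_vector_mult_scaleR power2_eq_square)
  have key: "t * (norm w)^2 \<le> f w" if "w \<in> V" for w
  proof (cases "w = 0")
    case True then show ?thesis by (simp add: f_def)
  next
    case False
    have "w /\<^sub>R norm w \<in> S" using that False V unfolding S_def by (simp add: subspace_scale)
    from zmin[OF this] have "t \<le> (1 / norm w)^2 * f w" by (simp add: t_def fscale divide_inverse)
    then have "t * (norm w)^2 \<le> (1 / norm w)^2 * f w * (norm w)^2" using False by (simp add: mult_right_mono)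
    also have "\<dots> = f w" using False by (simp add: power2_eq_square field_simps)
    finally show ?thesis .
  qed
  define w where "w = M *v z - t *\<^sub>R z"
  have orth: "h \<bullet> w = 0" if hV: "h \<in> V" for h
  proof -
    have "0 \<le> 2 * s * (h \<bullet> w) + s^2 * (f h - t * (h \<bullet> h))" for s
    proof -
      have "z + s *\<^sub>R h \<in> V" using zV hV V by (simp add: subspace_add subspace_scale)
      from key[OF this] have "t * (norm (z + s *\<^sub>R h))^2 \<le> f (z + s *\<^sub>R h)" .
      moreover have "(norm (z + s *\<^sub>R h))^2 = 1 + 2 * s * (z \<bullet> h) + s^2 * (h \<bullet> h)"
      proof -
        have zz: "z \<bullet> z = 1" using zn power2_norm_eq_inner[of z] by simp
        show ?thesis unfolding power2_norm_eq_inner using zz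
          by (simp add: inner_add_left inner_add_right inner_commute power2_eq_square algebra_simps)
      qed
      moreover have "f (z + s *\<^sub>R h) = t + 2 * s * (h \<bullet> (M *v z)) + s^2 * f h"
      proof -
        have "z \<bullet> (M *v h) = h \<bullet> (M *v z)" using sym[of z h] by (simp add: inner_commute)
        then show ?thesis unfolding f_def t_def
          by (simp add: matrix_vector_right_distrib matrix_vector_mult_scaleR inner_add_left inner_add_right
              power2_eq_square algebra_simps f_def)
      qed
      ultimately show ?thesis unfolding w_def
        by (simp add: inner_diff_right algebra_simps inner_commute power2_eq_square)
    qed
    then show ?thesis by (rule quad_nonneg_zero)
  qed
  have wV: "w \<in> V" unfolding w_def using inv[OF zV] zV V by (simp add: subspace_diff subspace_scale)
  have "w = 0" using orth[OF wV] by simp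
  then have "M *v z = t *\<^sub>R z" unfolding w_def by simp
  moreover have "t * (norm x)^2 \<le> x \<bullet> (M *v x)" using key[OF x(1)] by (simp add: f_def)
  ultimately show ?thesis using z0 tpos by blast
qed

lemma eig_finite:
  fixes M :: "real^'m^'m"
  assumes sym: "\<And>x y. (M *v x) \<bullet> y = x \<bullet> (M *v y)"
  shows "finite {t. \<exists>x. x \<noteq> 0 \<and> M *v x = t *\<^sub>R x}"
proof -
  define T where "T = {t. \<exists>x. x \<noteq> 0 \<and> M *v x = t *\<^sub>R x}"
  define g where "g t = (SOME x. x \<noteq> 0 \<and> M *v x = t *\<^sub>R x)" for t
  have g: "g t \<noteq> 0 \<and> M *v g t = t *\<^sub>R g t" if "t \<in> T" for t
    using that unfolding T_def g_def by (metis (mono_tags, lifting) mem_Collect_eq someI_ex)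
  have inj: "inj_on g T"
  proof (rule inj_onI)
    fix s t assume "s \<in> T" "t \<in> T" "g s = g t"
    then have "s *\<^sub>R g s = t *\<^sub>R g s" "g s \<noteq> 0" using g by metis+
    then show "s = t" by simp
  qed
  have orth: "pairwise orthogonal (g ` T)"
    unfolding pairwise_def
  proof (clarify)
    fix s t assume s: "s \<in> T" and t: "t \<in> T" and ne: "g s \<noteq> g t"
    then have st: "s \<noteq> t" by auto
    have "s * (g s \<bullet> g t) = (M *v g s) \<bullet> g t" using g[OF s] by simp
    also have "\<dots> = g s \<bullet> (M *v g t)" by (rule sym)
    also have "\<dots> = t * (g s \<bullet> g t)" using g[OF t] by simp
    finally have "(s - t) * (g s \<bullet> g t) = 0" by (simp add: algebra_simps)
    then show "orthogonal (g s) (g t)" using st by (simp add: orthogonal_def)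
  qed
  have "0 \<notin> g ` T" using g by auto
  then have "independent (g ` T)" using pairwise_orthogonal_independent orth by blast
  then have "finite (g ` T)" using independent_bound by blast
  then show ?thesis using inj finite_image_iff unfolding T_def by blast
qed

lemma lmpp_le:
  fixes M :: "real^'m^'m"
  assumes sym: "\<And>x y. (M *v x) \<bullet> y = x \<bullet> (M *v y)"
    and "z \<noteq> 0" "M *v z = t *\<^sub>R z" "t > 0"
  shows "lambda_min_pp M \<le> t" "lambda_min_pp M > 0"
proof -
  have fin: "finite {t. t > 0 \<and> (\<exists>x. x \<noteq> 0 \<and> M *v x = t *\<^sub>R x)}"
    by (rule finite_subset[OF _ eig_finite[OF sym]]) auto
  have mem: "t \<in> {t. t > 0 \<and> (\<exists>x. x \<noteq> 0 \<and> M *v x = t *\<^sub>R x)}" using assms by auto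
  show "lambda_min_pp M \<le> t" unfolding lambda_min_pp_def using Min_le[OF fin mem] .
  have "lambda_min_pp M \<in> {t. t > 0 \<and> (\<exists>x. x \<noteq> 0 \<and> M *v x = t *\<^sub>R x)}"
    unfolding lambda_min_pp_def using Min_in[OF fin] mem by blast
  then show "lambda_min_pp M > 0" by simp
qed



lemma AD_diag:
  fixes A :: "real^'n^'m" and D :: "real^'n^'n"
  assumes D_diag: "\<forall>i j. i \<noteq> j \<longrightarrow> D $ i $ j = 0"
  shows "(A ** D) $ i $ k = A $ i $ k * D $ k $ k"
proof -
  have "(A ** D) $ i $ k = (\<Sum>k'\<in>UNIV. A $ i $ k' * D $ k' $ k)" by (simp add: matrix_matrix_mult_def)
  also have "\<dots> = (\<Sum>k'\<in>UNIV. if k' = k then A $ i $ k * D $ k $ k else 0)"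
    using D_diag by (intro sum.cong) auto
  finally show ?thesis by simp
qed

lemma P_apply:
  fixes A :: "real^'n^'m" and D :: "real^'n^'n"
  assumes D_diag: "\<forall>i j. i \<noteq> j \<longrightarrow> D $ i $ j = 0"
  shows "(A ** D ** transpose A) *v x = (\<Sum>k\<in>UNIV. (D$k$k * (column k A \<bullet> x)) *\<^sub>R column k A)"
proof (subst vec_eq_iff, rule allI)
  fix i
  have "((A ** D ** transpose A) *v x) $ i = (\<Sum>l\<in>UNIV. (\<Sum>k\<in>UNIV. A$i$k * D$k$k * A$l$k) * x$l)"
    by (simp add: matrix_vector_mult_def matrix_matrix_mult_def[of "A ** D"] AD_diag[OF D_diag] transpose_def)
  also have "\<dots> = (\<Sum>l\<in>UNIV. \<Sum>k\<in>UNIV. A$i$k * D$k$k * A$l$k * x$l)"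
    by (simp add: sum_distrib_right)
  also have "\<dots> = (\<Sum>k\<in>UNIV. \<Sum>l\<in>UNIV. A$i$k * D$k$k * A$l$k * x$l)"
    by (rule sum.swap)
  also have "\<dots> = (\<Sum>k\<in>UNIV. D$k$k * (\<Sum>l\<in>UNIV. A$l$k * x$l) * A$i$k)"
    by (intro sum.cong refl) (simp add: sum_distrib_left sum_distrib_right mult_ac)
  also have "\<dots> = (\<Sum>k\<in>UNIV. (D$k$k * (column k A \<bullet> x)) *\<^sub>R column k A) $ i"
    by (simp add: inner_vec_def column_def)
  finally show "((A ** D ** transpose A) *v x) $ i = (\<Sum>k\<in>UNIV. (D$k$k * (column k A \<bullet> x)) *\<^sub>R column k A) $ i" .
qed

lemma G_apply:
  fixes B :: "real^'l^'m"
  shows "subcols_gram B J *v x = (\<Sum>j\<in>J. (column j B \<bullet> x) *\<^sub>R column j B)"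
proof (subst vec_eq_iff, rule allI)
  fix i
  have "(subcols_gram B J *v x) $ i = (\<Sum>l\<in>UNIV. (\<Sum>j\<in>J. B$i$j * B$l$j) * x$l)"
    by (simp add: matrix_vector_mult_def subcols_gram_def)
  also have "\<dots> = (\<Sum>l\<in>UNIV. \<Sum>j\<in>J. B$i$j * B$l$j * x$l)"
    by (simp add: sum_distrib_right)
  also have "\<dots> = (\<Sum>j\<in>J. \<Sum>l\<in>UNIV. B$i$j * B$l$j * x$l)"
    by (rule sum.swap)
  also have "\<dots> = (\<Sum>j\<in>J. (\<Sum>l\<in>UNIV. B$l$j * x$l) * B$i$j)"
    by (intro sum.cong refl) (simp add: sum_distrib_left sum_distrib_right mult_ac)
  also have "\<dots> = (\<Sum>j\<in>J. (column j B \<bullet> x) *\<^sub>R column j B) $ i"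
    by (simp add: inner_vec_def column_def)
  finally show "(subcols_gram B J *v x) $ i = (\<Sum>j\<in>J. (column j B \<bullet> x) *\<^sub>R column j B) $ i" .
qed

lemma tB_apply:
  fixes B :: "real^'l^'m"
  shows "(transpose B *v y) $ j = column j B \<bullet> y"
  by (simp add: matrix_vector_mult_def transpose_def inner_vec_def column_def mult.commute)

lemma mv_sum:
  fixes A :: "real^'n^'m"
  shows "A *v c = (\<Sum>i\<in>UNIV. c$i *\<^sub>R column i A)"
  by (simp add: matrix_mult_sum scalar_mult_eq_scaleR)

lemma columns_hconcat:
  fixes A :: "real^'n^'m" and B :: "real^'l^'m"
  shows "columns (hconcat A B) = range (\<lambda>i. column i A) \<union> range (\<lambda>j. column j B)"
proof -
  have c1: "column (Inl a) (hconcat A B) = column a A" for a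
    by (simp add: column_def hconcat_def)
  have c2: "column (Inr b) (hconcat A B) = column b B" for b
    by (simp add: column_def hconcat_def)
  show ?thesis unfolding columns_def
  proof (intro set_eqI iffI)
    fix v assume "v \<in> {column i (hconcat A B) |i. i \<in> UNIV}"
    then obtain i where "v = column i (hconcat A B)" by auto
    then show "v \<in> range (\<lambda>i. column i A) \<union> range (\<lambda>j. column j B)"
      by (cases i) (auto simp: c1 c2)
  next
    fix v assume "v \<in> range (\<lambda>i. column i A) \<union> range (\<lambda>j. column j B)"
    then show "v \<in> {column i (hconcat A B) |i. i \<in> UNIV}"
      by (auto simp flip: c1 c2)
  qed
qed

lemma dim_union_card:
  fixes S :: "'a::euclidean_space set"
  assumes "finite T"
  shows "dim (S \<union> T) \<le> dim S + card T"
proof -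
  obtain \<beta> where \<beta>: "\<beta> \<subseteq> S" "independent \<beta>" "S \<subseteq> span \<beta>" "card \<beta> = dim S"
    using basis_exists by blast
  have f: "finite \<beta>" using \<beta>(2) independent_bound by blast
  have "S \<union> T \<subseteq> span (\<beta> \<union> T)" using \<beta>(3) span_mono[of \<beta> "\<beta> \<union> T"]
    by (auto intro: span_base)
  then have "dim (S \<union> T) \<le> card (\<beta> \<union> T)" using f assms by (intro dim_le_card) auto
  also have "\<dots> \<le> card \<beta> + card T" by (rule card_Un_le)
  finally show ?thesis using \<beta>(4) by simp
qed

lemma rank_bound_J:
  fixes A :: "real^'n^'m" and B :: "real^'l^'m"
  assumes "\<forall>k. column k B \<in> span (range (\<lambda>i. column i A) \<union> (\<lambda>j. column j B) ` J)"
  shows "rank (hconcat A B) \<le> rank A + card J"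
proof -
  have "rank (hconcat A B) = dim (range (\<lambda>i. column i A) \<union> range (\<lambda>j. column j B))"
    by (simp add: column_rank_def columns_hconcat)
  also have "\<dots> \<le> dim (span (range (\<lambda>i. column i A) \<union> (\<lambda>j. column j B) ` J))"
    using assms by (intro dim_subset) (auto intro: span_base)
  also have "\<dots> = dim (range (\<lambda>i. column i A) \<union> (\<lambda>j. column j B) ` J)" by simp
  also have "\<dots> \<le> dim (range (\<lambda>i. column i A)) + card ((\<lambda>j. column j B) ` J)"
    by (rule dim_union_card) simp
  also have "\<dots> \<le> rank A + card J"
  proof -
    have "range (\<lambda>i. column i A) = columns A" by (auto simp: columns_def)
    then show ?thesis by (simp add: column_rank_def card_image_le add_left_mono)
  qed
  finally show ?thesis .
qed


lemma orth_span:
  fixes x :: "'a::euclidean_space"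
  assumes "\<forall>v\<in>G. v \<bullet> x = 0" "w \<in> span G"
  shows "w \<bullet> x = 0"
proof -
  have "orthogonal x w" using assms by (intro orthogonal_to_span[of w G x]) (auto simp: orthogonal_def inner_commute)
  then show ?thesis by (simp add: orthogonal_def inner_commute)
qed

theorem mainTheorem15:
  fixes A :: "real^'n^'m" and B :: "real^'l^'m" and D :: "real^'n^'n"
  assumes A_nz: "A \<noteq> 0"
    and D_diag: "\<forall>i j. i \<noteq> j \<longrightarrow> D $ i $ j = 0"
    and D_pos: "\<forall>i. D $ i $ i > 0"
  defines "vmin \<equiv> Min {lambda_min_pp (A ** D ** transpose A + subcols_gram B J) | J.
                          rank (hconcat A B) - rank A \<le> card J}"
  shows "vmin > 0 \<and>
    (\<forall>(c::real^'n) (d::real^'l).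
       let y = A *v c + B *v d in
       norm y = 1 \<and> (\<forall>j. (transpose B *v y) $ j \<le> 0) \<and> (\<forall>j. d $ j \<ge> 0)
       \<longrightarrow> y \<bullet> ((A ** D ** transpose A) *v y) \<ge> vmin)"
proof -
  define cols where "cols = range (\<lambda>i. column i A)"
  define bb where "bb = (\<lambda>j. column j B)"
  define P where "P = A ** D ** transpose A"
  define r where "r = rank (hconcat A B) - rank A"
  define MJ where "MJ J = P + subcols_gram B J" for J
  define VJ where "VJ J = span (cols \<union> bb ` J)" for J
  have Papp: "P *v x = (\<Sum>k\<in>UNIV. (D$k$k * (column k A \<bullet> x)) *\<^sub>R column k A)" for x
    unfolding P_def by (rule P_apply[OF D_diag])
  have Mapp: "MJ J *v x = (\<Sum>k\<in>UNIV. (D$k$k * (column k A \<bullet> x)) *\<^sub>R column k A) + (\<Sum>j\<in>J. (bb j \<bullet> x) *\<^sub>R bb j)" for J x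
    unfolding MJ_def bb_def by (simp add: matrix_vector_mult_add_rdistrib Papp G_apply)
  have Pquad: "x \<bullet> (P *v x) = (\<Sum>k\<in>UNIV. D$k$k * (column k A \<bullet> x)^2)" for x
    by (simp add: Papp inner_sum_right power2_eq_square mult_ac inner_commute)
  have Mquad: "x \<bullet> (MJ J *v x) = (\<Sum>k\<in>UNIV. D$k$k * (column k A \<bullet> x)^2) + (\<Sum>j\<in>J. (bb j \<bullet> x)^2)" for J x
    by (simp add: Mapp inner_add_right inner_sum_right power2_eq_square mult_ac inner_commute)
  have Msym: "(MJ J *v x) \<bullet> y = x \<bullet> (MJ J *v y)" for J x y
    by (simp add: Mapp inner_add_right inner_add_left inner_sum_right inner_sum_left mult_ac inner_commute)
  have VJsub: "subspace (VJ J)" for J unfolding VJ_def by simp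
  have Minv: "MJ J *v x \<in> VJ J" if "x \<in> VJ J" for J x
    unfolding Mapp VJ_def
    by (intro span_add span_sum span_scale span_base) (auto simp: cols_def)
  have Mpd: "x \<bullet> (MJ J *v x) > 0" if x: "x \<in> VJ J" "x \<noteq> 0" for J x
  proof (rule ccontr)
    assume "\<not> x \<bullet> (MJ J *v x) > 0"
    then have le: "(\<Sum>k\<in>UNIV. D$k$k * (column k A \<bullet> x)^2) + (\<Sum>j\<in>J. (bb j \<bullet> x)^2) \<le> 0"
      by (simp add: Mquad)
    have n1: "0 \<le> (\<Sum>k\<in>UNIV. D$k$k * (column k A \<bullet> x)^2)"
      using D_pos by (intro sum_nonneg) (simp add: less_imp_le)
    have n2: "0 \<le> (\<Sum>j\<in>J. (bb j \<bullet> x)^2)" by (intro sum_nonneg) simp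
    have s1: "(\<Sum>k\<in>UNIV. D$k$k * (column k A \<bullet> x)^2) = 0" using le n1 n2 by linarith
    have s2: "(\<Sum>j\<in>J. (bb j \<bullet> x)^2) = 0" using le n1 n2 by linarith
    have finJ: "finite J" by simp
    have a0: "column k A \<bullet> x = 0" for k
    proof -
      have "D$k$k * (column k A \<bullet> x)^2 = 0"
        using s1 sum_nonneg_eq_0_iff[of UNIV "\<lambda>k. D$k$k * (column k A \<bullet> x)^2"] D_pos
        by (simp add: less_imp_le)
      then show ?thesis using D_pos[rule_format, of k] by simp
    qed
    have b0: "bb j \<bullet> x = 0" if "j \<in> J" for j
      using s2 sum_nonneg_eq_0_iff[of J "\<lambda>j. (bb j \<bullet> x)^2"] finJ that by simp
    have "\<forall>v\<in>cols \<union> bb ` J. v \<bullet> x = 0" using a0 b0 by (auto simp: cols_def)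
    from orth_span[OF this, of x] x(1) have "x \<bullet> x = 0" by (simp add: VJ_def)
    then show False using x(2) by simp
  qed
  obtain k0 where k0: "column k0 A \<noteq> 0"
  proof -
    have "\<exists>k. column k A \<noteq> 0"
    proof (rule ccontr)
      assume "\<not> (\<exists>k. column k A \<noteq> 0)"
      then have "\<forall>k i. A $ i $ k = 0" by (auto simp: column_def vec_eq_iff)
      then have "A = 0" by (simp add: vec_eq_iff)
      then show False using A_nz by simp
    qed
    then show ?thesis using that by blast
  qed
  have lam_pos: "lambda_min_pp (MJ J) > 0" for J
  proof -
    have "column k0 A \<in> VJ J" unfolding VJ_def cols_def by (intro span_base) auto
    from rayleigh[OF Msym VJsub Minv Mpd this k0] obtain t z where
      "z \<noteq> 0" "MJ J *v z = t *\<^sub>R z" "t > 0" by blast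
    then show ?thesis using lmpp_le(2)[OF Msym] by blast
  qed
  have vset: "{lambda_min_pp (A ** D ** transpose A + subcols_gram B J) | J.
                          rank (hconcat A B) - rank A \<le> card J} = (\<lambda>J. lambda_min_pp (MJ J)) ` {J. r \<le> card J}"
    unfolding MJ_def P_def r_def by (rule setcompr_eq_image)
  have vmin_eq: "vmin = Min ((\<lambda>J. lambda_min_pp (MJ J)) ` {J. r \<le> card J})"
    unfolding vmin_def vset ..
  have fin: "finite ((\<lambda>J. lambda_min_pp (MJ J)) ` {J. r \<le> card J})" by simp
  have rb: "r \<le> card J" if "\<forall>k. column k B \<in> span (cols \<union> bb ` J)" for J
    using rank_bound_J[of B A J] that unfolding r_def cols_def bb_def by simp
  have ne: "(UNIV::'l set) \<in> {J. r \<le> card J}"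
    using rb[of UNIV] by (auto intro: span_base simp: bb_def)
  have part1: "vmin > 0"
  proof -
    have "vmin \<in> (\<lambda>J. lambda_min_pp (MJ J)) ` {J. r \<le> card J}"
      unfolding vmin_eq using fin ne by (intro Min_in) auto
    then show ?thesis using lam_pos by auto
  qed
  have part2: "y \<bullet> (P *v y) \<ge> vmin"
    if y_def: "y = A *v c + B *v d" and yn: "norm y = 1" and yB: "\<forall>j. (transpose B *v y) $ j \<le> 0"
      and d0: "\<forall>j. d $ j \<ge> 0" for c d y
  proof -
    have bby: "bb j \<bullet> y \<le> 0" for j
    proof -
      have "(transpose B *v y) $ j \<le> 0" using yB by blast
      then show ?thesis unfolding tB_apply bb_def .
    qed
    have Acs: "A *v c \<in> span cols"
      unfolding mv_sum cols_def by (intro span_sum span_scale span_base) auto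
    have "y - (\<Sum>j\<in>UNIV. d$j *\<^sub>R bb j) = A *v c"
      unfolding y_def bb_def mv_sum[of B d] by simp
    then have "y - (\<Sum>j\<in>UNIV. d$j *\<^sub>R bb j) \<in> span cols" using Acs by simp
    from caratheodory_mod[of "\<lambda>j. d$j", OF _ this] d0
    obtain K e where Ke: "\<forall>j\<in>K. e j \<ge> 0" "y - (\<Sum>j\<in>K. e j *\<^sub>R bb j) \<in> span cols" "indep_mod cols bb K"
      by blast
    obtain u0 z0 where u0: "u0 \<in> span cols" and z0: "\<And>w. w \<in> span cols \<Longrightarrow> orthogonal z0 w"
      and yu: "y = u0 + z0"
      using orthogonal_subspace_decomp_exists by metis
    from extend_lemma[OF _ Ke(3) u0]
    obtain x1 where x1: "x1 \<in> span (cols \<union> bb ` K)" "\<forall>v\<in>cols. v \<bullet> x1 = v \<bullet> u0" "\<forall>j\<in>K. bb j \<bullet> x1 = 0"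
      by auto
    have x1y: "v \<bullet> x1 = v \<bullet> y" if "v \<in> cols" for v
    proof -
      have "v \<bullet> z0 = 0" using z0[of v] that by (auto intro: span_base simp: orthogonal_def inner_commute)
      then show ?thesis using x1(2) that yu by (simp add: inner_add_right)
    qed
    define n where "n = x1 - y"
    have vn: "\<forall>v\<in>cols. v \<bullet> n = 0" using x1y by (simp add: n_def inner_diff_right)
    have yn0: "y \<bullet> n \<ge> 0"
    proof -
      define S where "S = (\<Sum>j\<in>K. e j *\<^sub>R bb j)"
      have e1: "y \<bullet> n = (y - S) \<bullet> n + S \<bullet> n"
        by (simp add: inner_diff_left)
      have e2: "(y - S) \<bullet> n = 0" using orth_span[OF vn Ke(2)] unfolding S_def .
      have e3: "S \<bullet> n = (\<Sum>j\<in>K. e j * (bb j \<bullet> n))"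
        unfolding S_def by (simp add: inner_sum_left)
      have e4: "(\<Sum>j\<in>K. e j * (bb j \<bullet> n)) \<ge> 0"
      proof (intro sum_nonneg)
        fix j assume j: "j \<in> K"
        have "bb j \<bullet> n = - (bb j \<bullet> y)" using x1(3) j by (simp add: n_def inner_diff_right)
        then have "bb j \<bullet> n \<ge> 0" using bby[of j] by simp
        then show "e j * (bb j \<bullet> n) \<ge> 0" using Ke(1) j by simp
      qed
      show ?thesis using e1 e2 e3 e4 by linarith
    qed
    have nx1: "norm x1 \<ge> 1"
    proof -
      have "x1 = y + n" by (simp add: n_def)
      then have "x1 \<bullet> x1 = y \<bullet> y + 2 * (y \<bullet> n) + n \<bullet> n"
        by (simp add: inner_add_left inner_add_right inner_commute)
      moreover have "y \<bullet> y = 1" using yn power2_norm_eq_inner[of y] by simp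
      moreover have "n \<bullet> n \<ge> 0" by simp
      ultimately have "x1 \<bullet> x1 \<ge> 1" using yn0 by linarith
      then have "(norm x1)^2 \<ge> 1^2" by (simp add: power2_norm_eq_inner)
      then show ?thesis using power2_le_imp_le[of 1 "norm x1"] by simp
    qed
    obtain E where E: "indep_mod (cols \<union> bb ` K) bb E" "\<forall>k. bb k \<in> span ((cols \<union> bb ` K) \<union> bb ` E)"
      using max_extension by blast
    from extend_lemma[OF _ E(1) x1(1)]
    obtain x where x: "x \<in> span ((cols \<union> bb ` K) \<union> bb ` E)" "\<forall>v\<in>cols \<union> bb ` K. v \<bullet> x = v \<bullet> x1"
      "\<forall>j\<in>E. bb j \<bullet> x = 0" "norm x1 \<le> norm x"
      by auto
    define J where "J = K \<union> E"
    have eqJ: "(cols \<union> bb ` K) \<union> bb ` E = cols \<union> bb ` J" by (auto simp: J_def)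
    have xV: "x \<in> VJ J" using x(1) eqJ by (simp add: VJ_def)
    have nx: "norm x \<ge> 1" using x(4) nx1 by simp
    then have xnz: "x \<noteq> 0" by auto
    have bJ: "bb j \<bullet> x = 0" if "j \<in> J" for j
      using that x(2,3) x1(3) unfolding J_def by auto
    have aJ: "column k A \<bullet> x = column k A \<bullet> y" for k
      using x(2) x1y[of "column k A"] by (auto simp: cols_def)
    have quad: "x \<bullet> (MJ J *v x) = y \<bullet> (P *v y)"
      unfolding Mquad Pquad using bJ aJ by simp
    from rayleigh[OF Msym VJsub Minv Mpd xV xnz]
    obtain t z where tz: "z \<noteq> 0" "MJ J *v z = t *\<^sub>R z" "t > 0" "t * (norm x)^2 \<le> x \<bullet> (MJ J *v x)"
      by blast
    have "t \<le> t * (norm x)^2"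
    proof -
      have "(norm x)^2 \<ge> 1" using nx by (simp add: one_le_power)
      then show ?thesis using tz(3) by (simp add: mult_le_cancel_left1)
    qed
    then have "t \<le> y \<bullet> (P *v y)" using tz(4) quad by simp
    moreover have "lambda_min_pp (MJ J) \<le> t" using lmpp_le(1)[OF Msym tz(1,2,3)] .
    moreover have "vmin \<le> lambda_min_pp (MJ J)"
    proof -
      have "\<forall>k. column k B \<in> span (cols \<union> bb ` J)" using E(2) eqJ by (simp add: bb_def)
      then have "r \<le> card J" by (rule rb)
      then show ?thesis unfolding vmin_eq using fin by (intro Min_le) auto
    qed
    ultimately show ?thesis by simp
  qed
  show ?thesis
    using part1 part2 unfolding Let_def P_def by blast
qed

end
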